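(* Let $G$ be a topological group and $A$ a topological $G$-module. Suppose that for every $p\ge 0$ the augmented column complex $0\to A_c^p(G,A)\xrightarrow{\epsilon}A_{lc}^{p,0}(G,A)\xrightarrow{d_v}A_{lc}^{p,1}(G,A)\xrightarrow{d_v}\cdots$ is exact. Then for every $p\ge 0$ the augmented sub column complex of equivariant cochains $0\to C_c^p(G,A)\xrightarrow{\epsilon}A_{lc}^{p,0}(G,A)^G\xrightarrow{d_v}A_{lc}^{p,1}(G,A)^G\xrightarrow{d_v}\cdots$ is exact as well.
   Context: A topological $G$-module is an abelian topological group $A$ with an action of $G$ by group automorphisms such that the action map $G\times A\to A$ is continuous. For an identity neighbourhood $U$ of $G$ put $\Gamma_U^0:=G$ and, for $q\ge 1$, $\Gamma_U^q:=\{(g_0,\dots,g_q)\in G^{q+1}\mid g_i^{-1}g_j\in U \text{ for all } i,j\}$. $A_c^p(G,A):=C(G^{p+1},A)$ is the group of continuous maps, and $C_c^p(G,A)$ is its subgroup of $G$-equivariant maps, where $G$ acts by $(g.f)(g_0,\dots,g_p)=g.f(g^{-1}g_0,\dots,g^{-1}g_p)$. $A_{lc}^{p,q}(G,A)$ is the group of maps $f\colon G^{p+1}\times G^{q+1}\to A$ whose restriction to $G^{p+1}\times\Gamma_U^q$ is continuous for some identity neighbourhood $U$; $d_v f(\vec x,y_0,\dots,y_{q+1})=(-1)^p\sum_{i=0}^{q+1}(-1)^i f(\vec x,y_0,\dots,\widehat{y_i},\dots,y_{q+1})$. $G$ acts on $A_{lc}^{p,q}(G,A)$ by $(g.f)(\vec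 x,\vec y)=g.f(g^{-1}\vec x,g^{-1}\vec y)$ and $A_{lc}^{p,q}(G,A)^G$ denotes the fixed points. The augmentation is $\epsilon(f)(\vec x,y_0)=f(\vec x)$. *)

theory Defs
  imports "HOL-Analysis.Analysis"
begin

text \<open>The topological group G is the whole type 'g of class
  topological_group_add (additive notation, not necessarily commutative):
  g^{-1} h is written - g + h. Tuples (g_0,...,g_p) in G^{p+1} are extensional
  functions in tup p = PiE {..p} (\<lambda>_. UNIV), carrying the product topology.
  Cochains are represented by functions vanishing outside the relevant tuples.\<close>

definition tup :: "nat \<Rightarrow> (nat \<Rightarrow> 'g) set" where
  "tup p = PiE {..p} (\<lambda>_. UNIV)"

definition tuptop :: "nat \<Rightarrow> (nat \<Rightarrow> 'g::topological_space) topology" where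
  "tuptop p = product_topology (\<lambda>_. euclidean) {..p}"

definition top_G_module :: "('g::topological_group_add \<Rightarrow> 'a::topological_ab_group_add \<Rightarrow> 'a) \<Rightarrow> bool" where
  "top_G_module act \<longleftrightarrow>
     (\<forall>a. act 0 a = a) \<and>
     (\<forall>g h a. act (g + h) a = act g (act h a)) \<and>
     (\<forall>g a b. act g (a + b) = act g a + act g b) \<and>
     continuous_on UNIV (\<lambda>(g, a). act g a)"

definition transl :: "nat \<Rightarrow> 'g::group_add \<Rightarrow> (nat \<Rightarrow> 'g) \<Rightarrow> (nat \<Rightarrow> 'g)" where
  "transl p g x = (\<lambda>i. if i \<le> p then - g + x i else undefined)"

definition Gamma :: "'g::group_add set \<Rightarrow> nat \<Rightarrow> (nat \<Rightarrow> 'g) set" where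
  "Gamma U q = {y \<in> tup q. \<forall>i\<le>q. \<forall>j\<le>q. - y i + y j \<in> U}"

definition Ac :: "nat \<Rightarrow> ((nat \<Rightarrow> 'g::topological_group_add) \<Rightarrow> 'a::topological_ab_group_add) set" where
  "Ac p = {f. continuous_map (tuptop p) euclidean f \<and> (\<forall>x. x \<notin> tup p \<longrightarrow> f x = 0)}"

definition Cc :: "('g::topological_group_add \<Rightarrow> 'a::topological_ab_group_add \<Rightarrow> 'a) \<Rightarrow> nat
     \<Rightarrow> ((nat \<Rightarrow> 'g) \<Rightarrow> 'a) set" where
  "Cc act p = {f \<in> Ac p. \<forall>g. \<forall>x\<in>tup p. act g (f (transl p g x)) = f x}"

definition Alc :: "nat \<Rightarrow> nat \<Rightarrow>
     ((nat \<Rightarrow> 'g::topological_group_add) \<Rightarrow> (nat \<Rightarrow> 'g) \<Rightarrow> 'a::topological_ab_group_add) set" where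
  "Alc p q = {f. (\<exists>U. open U \<and> (0::'g) \<in> U \<and>
        continuous_map (subtopology (prod_topology (tuptop p) (tuptop q)) (tup p \<times> Gamma U q))
          euclidean (\<lambda>(x, y). f x y)) \<and>
      (\<forall>x y. x \<notin> tup p \<or> y \<notin> tup q \<longrightarrow> f x y = 0)}"

definition AlcG :: "('g::topological_group_add \<Rightarrow> 'a::topological_ab_group_add \<Rightarrow> 'a) \<Rightarrow> nat \<Rightarrow> nat
     \<Rightarrow> ((nat \<Rightarrow> 'g) \<Rightarrow> (nat \<Rightarrow> 'g) \<Rightarrow> 'a) set" where
  "AlcG act p q = {f \<in> Alc p q. \<forall>g. \<forall>x\<in>tup p. \<forall>y\<in>tup q.
        act g (f (transl p g x) (transl q g y)) = f x y}"

text \<open>Deleting the i-th entry of a (q+1)+1-tuple, giving a (q+1)-tuple (indices 0..q).\<close>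
definition delete :: "nat \<Rightarrow> nat \<Rightarrow> (nat \<Rightarrow> 'g) \<Rightarrow> (nat \<Rightarrow> 'g)" where
  "delete q i y = (\<lambda>k. if k \<le> q then (if k < i then y k else y (Suc k)) else undefined)"

definition dv :: "nat \<Rightarrow> nat \<Rightarrow> ((nat \<Rightarrow> 'g) \<Rightarrow> (nat \<Rightarrow> 'g) \<Rightarrow> 'a::ab_group_add)
     \<Rightarrow> (nat \<Rightarrow> 'g) \<Rightarrow> (nat \<Rightarrow> 'g) \<Rightarrow> 'a" where
  "dv p q f x y = (if x \<in> tup p \<and> y \<in> tup (Suc q)
     then (\<Sum>i\<le>Suc q. if even (p + i) then f x (delete q i y) else - f x (delete q i y))
     else 0)"

definition aug :: "nat \<Rightarrow> ((nat \<Rightarrow> 'g) \<Rightarrow> 'a::zero) \<Rightarrow> (nat \<Rightarrow> 'g) \<Rightarrow> (nat \<Rightarrow> 'g) \<Rightarrow> 'a" where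
  "aug p f x y = (if x \<in> tup p \<and> y \<in> tup 0 then f x else 0)"

definition aug_exact :: "((nat \<Rightarrow> 'g) \<Rightarrow> 'a::zero) set
     \<Rightarrow> (((nat \<Rightarrow> 'g) \<Rightarrow> 'a) \<Rightarrow> (nat \<Rightarrow> 'g) \<Rightarrow> (nat \<Rightarrow> 'g) \<Rightarrow> 'a)
     \<Rightarrow> (nat \<Rightarrow> ((nat \<Rightarrow> 'g) \<Rightarrow> (nat \<Rightarrow> 'g) \<Rightarrow> 'a) set)
     \<Rightarrow> (nat \<Rightarrow> ((nat \<Rightarrow> 'g) \<Rightarrow> (nat \<Rightarrow> 'g) \<Rightarrow> 'a) \<Rightarrow> (nat \<Rightarrow> 'g) \<Rightarrow> (nat \<Rightarrow> 'g) \<Rightarrow> 'a)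
     \<Rightarrow> bool" where
  "aug_exact C e L d \<longleftrightarrow>
     (\<forall>f\<in>C. e f = (\<lambda>_ _. 0) \<longrightarrow> f = (\<lambda>_. 0)) \<and>
     {f \<in> L 0. d 0 f = (\<lambda>_ _. 0)} = e ` C \<and>
     (\<forall>q. {f \<in> L (Suc q). d (Suc q) f = (\<lambda>_ _. 0)} = d q ` L q)"

end

theory Submission
  imports Defs
begin

lemma cm_binop:
  assumes "continuous_map X euclidean F" "continuous_map X euclidean H"
    and "continuous_on UNIV (\<lambda>(a,b). \<phi> a b)"
  shows "continuous_map X euclidean (\<lambda>z. \<phi> (F z) (H z))"
proof -
  have "continuous_map X (prod_topology euclidean euclidean) (\<lambda>z. (F z, H z))"
    using assms by (intro continuous_map_pairedI)
  hence "continuous_map X euclidean (\<lambda>z. (F z, H z))" by simp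
  moreover have "continuous_map euclidean euclidean (\<lambda>(a,b). \<phi> a b)" using assms(3) by simp
  ultimately have "continuous_map X euclidean ((\<lambda>(a,b). \<phi> a b) \<circ> (\<lambda>z. (F z, H z)))"
    by (rule continuous_map_compose)
  thus ?thesis by (simp add: o_def)
qed

lemma topspace_tuptop[simp]: "topspace (tuptop p) = tup p"
  by (simp add: tuptop_def tup_def)

lemma transl_tup: "transl p g x \<in> tup p"
  by (auto simp: tup_def transl_def PiE_iff extensional_def)

lemma transl_transl: "x \<in> tup p \<Longrightarrow> transl p g (transl p h x) = transl p (h + g) x"
  by (auto simp: transl_def fun_eq_iff) (metis add.assoc minus_add)

lemma delete_tup: "delete q i y \<in> tup q"
  by (auto simp: tup_def delete_def PiE_iff extensional_def)

lemma delete_transl: "transl q g (delete q i y) = delete q i (transl (Suc q) g y)"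
  by (auto simp: transl_def delete_def)

lemma transl_Gamma: "y \<in> Gamma U q \<Longrightarrow> transl q g y \<in> Gamma U q"
proof -
  assume "y \<in> Gamma U q"
  moreover have "transl q g y \<in> tup q" by (rule transl_tup)
  ultimately show ?thesis by (auto simp: Gamma_def transl_def add.assoc[symmetric] minus_add)
qed

lemma
  assumes "top_G_module act"
  shows act_zero: "act g 0 = 0" and act_minus: "act g (- a) = - act g a"
    and act_sum: "act g (sum f S) = (\<Sum>i\<in>S. act g (f i))"
    and act_comp: "act g (act h a) = act (g + h) a"
    and act_cont: "continuous_on UNIV (\<lambda>(g, a). act g a)"
proof -
  have add: "\<And>a b. act g (a + b) = act g a + act g b" using assms by (simp add: top_G_module_def)
  show z: "act g 0 = 0" using add[of 0 0] by simp
  show "act g (- a) = - act g a" using add[of a "-a"] z by (metis minus_unique right_minus)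
  show "act g (sum f S) = (\<Sum>i\<in>S. act g (f i))"
    by (induction S rule: infinite_finite_induct) (auto simp: z add)
  show "act g (act h a) = act (g + h) a" using assms by (simp add: top_G_module_def)
  show "continuous_on UNIV (\<lambda>(g, a). act g a)" using assms by (simp add: top_G_module_def)
qed

lemma dv_equiv:
  fixes act :: "'g::topological_group_add \<Rightarrow> 'a::topological_ab_group_add \<Rightarrow> 'a"
    and h :: "(nat \<Rightarrow> 'g) \<Rightarrow> (nat \<Rightarrow> 'g) \<Rightarrow> 'a"
  assumes G: "top_G_module act"
    and E: "\<forall>g. \<forall>x\<in>tup p. \<forall>y\<in>tup q. act g (h (transl p g x) (transl q g y)) = h x y"
  shows "\<forall>g. \<forall>x\<in>tup p. \<forall>y\<in>tup (Suc q). act g (dv p q h (transl p g x) (transl (Suc q) g y)) = dv p q h x y"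
proof (intro allI ballI)
  fix g and x y :: "nat \<Rightarrow> 'g" assume x: "x \<in> tup p" and y: "y \<in> tup (Suc q)"
  have t: "\<And>i. act g (h (transl p g x) (delete q i (transl (Suc q) g y))) = h x (delete q i y)"
    unfolding delete_transl[symmetric] using E x delete_tup by blast
  have "act g (dv p q h (transl p g x) (transl (Suc q) g y)) =
     act g (\<Sum>i\<le>Suc q. if even (p + i) then h (transl p g x) (delete q i (transl (Suc q) g y))
        else - h (transl p g x) (delete q i (transl (Suc q) g y)))"
    by (simp add: dv_def transl_tup)
  also have "\<dots> = (\<Sum>i\<le>Suc q. act g (if even (p + i) then h (transl p g x) (delete q i (transl (Suc q) g y))
        else - h (transl p g x) (delete q i (transl (Suc q) g y))))"
    by (rule act_sum[OF G])
  also have "\<dots> = (\<Sum>i\<le>Suc q. if even (p + i) then h x (delete q i y) else - h x (delete q i y))"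
    by (rule sum.cong) (auto simp: act_minus[OF G] t)
  also have "\<dots> = dv p q h x y" using x y by (simp add: dv_def)
  finally show "act g (dv p q h (transl p g x) (transl (Suc q) g y)) = dv p q h x y" .
qed

lemma proj_fst:
  assumes "k \<le> p"
  shows "continuous_map (subtopology (prod_topology (tuptop p) (tuptop q)) T) euclidean (\<lambda>z. fst z k)"
proof -
  have "continuous_map (tuptop p) euclidean (\<lambda>x. x k)"
    unfolding tuptop_def using assms by (intro continuous_map_product_projection) auto
  hence "continuous_map (prod_topology (tuptop p) (tuptop q)) euclidean ((\<lambda>x. x k) \<circ> fst)"
    by (intro continuous_map_compose[OF continuous_map_fst])
  thus ?thesis by (intro continuous_map_from_subtopology) (simp add: o_def)
qed

lemma proj_snd:
  assumes "k \<le> q"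
  shows "continuous_map (subtopology (prod_topology (tuptop p) (tuptop q)) T) euclidean (\<lambda>z. snd z k)"
proof -
  have "continuous_map (tuptop q) euclidean (\<lambda>x. x k)"
    unfolding tuptop_def using assms by (intro continuous_map_product_projection) auto
  hence "continuous_map (prod_topology (tuptop p) (tuptop q)) euclidean ((\<lambda>x. x k) \<circ> snd)"
    by (intro continuous_map_compose[OF continuous_map_snd])
  thus ?thesis by (intro continuous_map_from_subtopology) (simp add: o_def)
qed

lemma Gamma_tup: "Gamma U q \<subseteq> tup q" by (auto simp: Gamma_def)

lemma diff_cont: "continuous_on UNIV (\<lambda>(a::'g::topological_group_add, b). - a + b)"
  unfolding case_prod_beta by (intro continuous_intros)

lemma psi_cont:
  fixes U :: "'g::topological_group_add set" and p q :: nat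
  defines "S \<equiv> subtopology (prod_topology (tuptop p) (tuptop q)) (tup p \<times> Gamma U q)"
  shows "continuous_map S S (\<lambda>z. (transl p (fst z 0) (fst z), transl q (fst z 0) (snd z)))"
proof -
  have ts: "topspace S = tup p \<times> Gamma U q"
    using Gamma_tup by (auto simp: S_def)
  have c1: "continuous_map S (tuptop p) (\<lambda>z. transl p (fst z 0) (fst z))"
    unfolding tuptop_def continuous_map_componentwise
  proof (intro conjI ballI)
    show "(\<lambda>z. transl p (fst z 0) (fst z)) ` topspace S \<subseteq> extensional {..p}"
      by (auto simp: transl_def extensional_def)
    fix k assume k: "k \<in> {..p}"
    have "continuous_map S euclidean (\<lambda>z. - fst z 0 + fst z k)"
      unfolding S_def using k
      by (intro cm_binop[OF proj_fst proj_fst diff_cont]) auto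
    thus "continuous_map S euclidean (\<lambda>z. transl p (fst z 0) (fst z) k)"
      using k by (simp add: transl_def)
  qed
  have c2: "continuous_map S (tuptop q) (\<lambda>z. transl q (fst z 0) (snd z))"
    unfolding tuptop_def continuous_map_componentwise
  proof (intro conjI ballI)
    show "(\<lambda>z. transl q (fst z 0) (snd z)) ` topspace S \<subseteq> extensional {..q}"
      by (auto simp: transl_def extensional_def)
    fix k assume k: "k \<in> {..q}"
    have "continuous_map S euclidean (\<lambda>z. - fst z 0 + snd z k)"
      unfolding S_def using k
      by (intro cm_binop[OF proj_fst proj_snd diff_cont]) auto
    thus "continuous_map S euclidean (\<lambda>z. transl q (fst z 0) (snd z) k)"
      using k by (simp add: transl_def)
  qed
  have "continuous_map S (prod_topology (tuptop p) (tuptop q))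
          (\<lambda>z. (transl p (fst z 0) (fst z), transl q (fst z 0) (snd z)))"
    using c1 c2 by (simp add: continuous_map_paired)
  moreover have "(\<lambda>z. (transl p (fst z 0) (fst z), transl q (fst z 0) (snd z))) \<in> topspace S \<rightarrow> tup p \<times> Gamma U q"
  proof (rule funcsetI)
    fix z assume "z \<in> topspace S"
    hence "snd z \<in> Gamma U q" using ts by (auto simp: mem_Times_iff)
    thus "(transl p (fst z 0) (fst z), transl q (fst z 0) (snd z)) \<in> tup p \<times> Gamma U q"
      using transl_tup transl_Gamma by blast
  qed
  ultimately have "continuous_map S (subtopology (prod_topology (tuptop p) (tuptop q)) (tup p \<times> Gamma U q))
          (\<lambda>z. (transl p (fst z 0) (fst z), transl q (fst z 0) (snd z)))"
    using continuous_map_in_subtopology by blast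
  thus ?thesis by (simp only: S_def)
qed

lemma twist_AlcG:
  fixes act :: "'g::topological_group_add \<Rightarrow> 'a::topological_ab_group_add \<Rightarrow> 'a"
    and h :: "(nat \<Rightarrow> 'g) \<Rightarrow> (nat \<Rightarrow> 'g) \<Rightarrow> 'a"
  assumes G: "top_G_module act" and h: "h \<in> Alc p q"
  defines "h' \<equiv> \<lambda>x y. if x \<in> tup p \<and> y \<in> tup q
      then act (x 0) (h (transl p (x 0) x) (transl q (x 0) y)) else 0"
  shows "h' \<in> AlcG act p q"
proof -
  obtain U :: "'g set" where U: "open U" "0 \<in> U"
    and hc: "continuous_map (subtopology (prod_topology (tuptop p) (tuptop q)) (tup p \<times> Gamma U q))
          euclidean (\<lambda>(x, y). h x y)"
    using h by (auto simp: Alc_def)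
  define S where "S = subtopology (prod_topology (tuptop p :: (nat \<Rightarrow> 'g) topology) (tuptop q)) (tup p \<times> Gamma U q)"
  have ts: "topspace S = tup p \<times> Gamma U q"
    using Gamma_tup by (auto simp: S_def)
  have psi: "continuous_map S S (\<lambda>z. (transl p (fst z 0) (fst z), transl q (fst z 0) (snd z)))"
    unfolding S_def by (rule psi_cont)
  have "continuous_map S euclidean ((\<lambda>(x, y). h x y) \<circ> (\<lambda>z. (transl p (fst z 0) (fst z), transl q (fst z 0) (snd z))))"
    using psi hc unfolding S_def[symmetric] by (rule continuous_map_compose)
  hence c2: "continuous_map S euclidean (\<lambda>z. h (transl p (fst z 0) (fst z)) (transl q (fst z 0) (snd z)))"
    by (simp add: o_def)
  have c1: "continuous_map S euclidean (\<lambda>z. fst z 0)" unfolding S_def by (rule proj_fst) simp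
  have "continuous_map S euclidean (\<lambda>z. act (fst z 0) (h (transl p (fst z 0) (fst z)) (transl q (fst z 0) (snd z))))"
    by (rule cm_binop[OF c1 c2 act_cont[OF G]])
  hence cont: "continuous_map S euclidean (\<lambda>(x, y). h' x y)"
    by (rule continuous_map_eq) (use ts in \<open>auto simp: h'_def dest: subsetD[OF Gamma_tup]\<close>)
  have inAlc: "h' \<in> Alc p q"
    unfolding Alc_def using U cont by (auto simp: h'_def S_def)
  have eq: "act g (h' (transl p g x) (transl q g y)) = h' x y" if x: "x \<in> tup p" and y: "y \<in> tup q" for g x y
  proof -
    have x0: "transl p g x 0 = - g + x 0" by (simp add: transl_def)
    have "act g (h' (transl p g x) (transl q g y)) =
        act g (act (- g + x 0) (h (transl p (- g + x 0) (transl p g x)) (transl q (- g + x 0) (transl q g y))))"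
      by (simp add: h'_def transl_tup x0)
    also have "\<dots> = act (x 0) (h (transl p (x 0) x) (transl q (x 0) y))"
      using x y by (simp add: act_comp[OF G] transl_transl add.assoc[symmetric])
    also have "\<dots> = h' x y" using x y by (simp add: h'_def)
    finally show ?thesis .
  qed
  show ?thesis using inAlc eq by (auto simp: AlcG_def)
qed

lemma twist_dv:
  fixes act :: "'g::topological_group_add \<Rightarrow> 'a::topological_ab_group_add \<Rightarrow> 'a"
    and h :: "(nat \<Rightarrow> 'g) \<Rightarrow> (nat \<Rightarrow> 'g) \<Rightarrow> 'a"
  assumes G: "top_G_module act" and f: "f \<in> AlcG act p (Suc q)" and d: "dv p q h = f"
  defines "h' \<equiv> \<lambda>x y. if x \<in> tup p \<and> y \<in> tup q
      then act (x 0) (h (transl p (x 0) x) (transl q (x 0) y)) else 0"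
  shows "dv p q h' = f"
proof (intro ext)
  fix x y
  show "dv p q h' x y = f x y"
  proof (cases "x \<in> tup p \<and> y \<in> tup (Suc q)")
    case False
    thus ?thesis using f by (auto simp: dv_def AlcG_def Alc_def)
  next
    case True
    hence x: "x \<in> tup p" and y: "y \<in> tup (Suc q)" by auto
    have "dv p q h' x y = (\<Sum>i\<le>Suc q. if even (p + i) then h' x (delete q i y) else - h' x (delete q i y))"
      using x y by (simp add: dv_def)
    also have "\<dots> = (\<Sum>i\<le>Suc q. act (x 0) (if even (p + i) then h (transl p (x 0) x) (delete q i (transl (Suc q) (x 0) y))
          else - h (transl p (x 0) x) (delete q i (transl (Suc q) (x 0) y))))"
      by (rule sum.cong) (auto simp: h'_def x delete_tup delete_transl act_minus[OF G])
    also have "\<dots> = act (x 0) (\<Sum>i\<le>Suc q. if even (p + i) then h (transl p (x 0) x) (delete q i (transl (Suc q) (x 0) y))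
          else - h (transl p (x 0) x) (delete q i (transl (Suc q) (x 0) y)))"
      by (rule act_sum[OF G, symmetric])
    also have "\<dots> = act (x 0) (dv p q h (transl p (x 0) x) (transl (Suc q) (x 0) y))"
      by (simp add: dv_def transl_tup)
    also have "\<dots> = f x y" using f x y d by (auto simp: AlcG_def)
    finally show ?thesis .
  qed
qed

theorem mainTheorem2:
  fixes act :: "'g::topological_group_add \<Rightarrow> 'a::topological_ab_group_add \<Rightarrow> 'a"
  assumes "top_G_module act"
    and "\<forall>p. aug_exact (Ac p :: ((nat \<Rightarrow> 'g) \<Rightarrow> 'a) set) (aug p) (Alc p) (dv p)"
  shows "\<forall>p. aug_exact (Cc act p) (aug p) (AlcG act p) (dv p)"
proof
  fix p
  note G = assms(1)
  have H: "aug_exact (Ac p :: ((nat \<Rightarrow> 'g) \<Rightarrow> 'a) set) (aug p) (Alc p) (dv p)" using assms(2) by blast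
  have H1: "\<forall>f\<in>(Ac p :: ((nat \<Rightarrow> 'g) \<Rightarrow> 'a) set). aug p f = (\<lambda>_ _. 0) \<longrightarrow> f = (\<lambda>_. 0)"
   and H2: "{f \<in> Alc p 0. dv p 0 f = (\<lambda>_ _. 0)} = aug p ` (Ac p :: ((nat \<Rightarrow> 'g) \<Rightarrow> 'a) set)"
   and H3: "\<And>q. {f \<in> (Alc p (Suc q) :: ((nat \<Rightarrow> 'g) \<Rightarrow> (nat \<Rightarrow> 'g) \<Rightarrow> 'a) set). dv p (Suc q) f = (\<lambda>_ _. 0)} = dv p q ` Alc p q"
    using H unfolding aug_exact_def by blast+
  have CcAc: "Cc act p \<subseteq> Ac p" by (auto simp: Cc_def)
  have AG: "\<And>q. AlcG act p q \<subseteq> Alc p q" by (auto simp: AlcG_def)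
  show "aug_exact (Cc act p) (aug p) (AlcG act p) (dv p)"
    unfolding aug_exact_def
  proof (intro conjI allI)
    show "\<forall>f\<in>Cc act p. aug p f = (\<lambda>_ _. 0) \<longrightarrow> f = (\<lambda>_. 0)" using H1 CcAc by blast
    show "{f \<in> AlcG act p 0. dv p 0 f = (\<lambda>_ _. 0)} = aug p ` Cc act p"
    proof
      show "{f \<in> AlcG act p 0. dv p 0 f = (\<lambda>_ _. 0)} \<subseteq> aug p ` Cc act p"
      proof
        fix f assume f: "f \<in> {f \<in> AlcG act p 0. dv p 0 f = (\<lambda>_ _. 0)}"
        hence "f \<in> {f \<in> Alc p 0. dv p 0 f = (\<lambda>_ _. 0)}" using AG by blast
        then obtain c where c: "c \<in> Ac p" and fc: "f = aug p c" using H2 by blast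
        define y0 :: "nat \<Rightarrow> 'g" where "y0 = (\<lambda>i. if i \<le> 0 then 0 else undefined)"
        have y0: "y0 \<in> tup 0" by (auto simp: y0_def tup_def PiE_iff extensional_def)
        have "c \<in> Cc act p"
          unfolding Cc_def
        proof (intro CollectI conjI c allI ballI)
          fix g and x :: "nat \<Rightarrow> 'g" assume x: "x \<in> tup p"
          have "act g (c (transl p g x)) = act g (f (transl p g x) (transl 0 g y0))"
            by (simp add: fc aug_def transl_tup)
          also have "\<dots> = f x y0" using f x y0 by (auto simp: AlcG_def)
          also have "\<dots> = c x" using x y0 by (simp add: fc aug_def)
          finally show "act g (c (transl p g x)) = c x" .
        qed
        thus "f \<in> aug p ` Cc act p" using fc by blast
      qed
      show "aug p ` Cc act p \<subseteq> {f \<in> AlcG act p 0. dv p 0 f = (\<lambda>_ _. 0)}"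
      proof
        fix f assume "f \<in> aug p ` Cc act p"
        then obtain c where c: "c \<in> Cc act p" and fc: "f = aug p c" by blast
        have "f \<in> {f \<in> Alc p 0. dv p 0 f = (\<lambda>_ _. 0)}" using H2 c CcAc fc by blast
        moreover have "act g (f (transl p g x) (transl 0 g y)) = f x y" if "x \<in> tup p" "y \<in> tup 0" for g and x y :: "nat \<Rightarrow> 'g"
          using c that by (auto simp: fc aug_def transl_tup Cc_def)
        ultimately show "f \<in> {f \<in> AlcG act p 0. dv p 0 f = (\<lambda>_ _. 0)}" by (auto simp: AlcG_def)
      qed
    qed
    fix q
    show "{f \<in> AlcG act p (Suc q). dv p (Suc q) f = (\<lambda>_ _. 0)} = dv p q ` AlcG act p q"
    proof
      show "{f \<in> AlcG act p (Suc q). dv p (Suc q) f = (\<lambda>_ _. 0)} \<subseteq> dv p q ` AlcG act p q"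
      proof
        fix f assume f: "f \<in> {f \<in> AlcG act p (Suc q). dv p (Suc q) f = (\<lambda>_ _. 0)}"
        hence "f \<in> {f \<in> Alc p (Suc q). dv p (Suc q) f = (\<lambda>_ _. 0)}" using AG by blast
        hence "f \<in> dv p q ` Alc p q" using H3[of q] by blast
        then obtain h where h: "h \<in> Alc p q" and fh: "dv p q h = f" by blast
        define h' where "h' = (\<lambda>x y. if x \<in> tup p \<and> y \<in> tup q
          then act (x 0) (h (transl p (x 0) x) (transl q (x 0) y)) else 0)"
        have "h' \<in> AlcG act p q" unfolding h'_def by (rule twist_AlcG[OF G h])
        moreover have "dv p q h' = f" unfolding h'_def
          by (rule twist_dv[OF G _ fh]) (use f in blast)
        ultimately show "f \<in> dv p q ` AlcG act p q" by blast
      qed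
      show "dv p q ` AlcG act p q \<subseteq> {f \<in> AlcG act p (Suc q). dv p (Suc q) f = (\<lambda>_ _. 0)}"
      proof
        fix f assume "f \<in> dv p q ` AlcG act p q"
        then obtain h where h: "h \<in> AlcG act p q" and fh: "f = dv p q h" by blast
        have "f \<in> {f \<in> Alc p (Suc q). dv p (Suc q) f = (\<lambda>_ _. 0)}" using H3[of q] h AG fh by blast
        moreover have "\<forall>g. \<forall>x\<in>tup p. \<forall>y\<in>tup (Suc q). act g (f (transl p g x) (transl (Suc q) g y)) = f x y"
          unfolding fh by (rule dv_equiv[OF G]) (use h in \<open>auto simp: AlcG_def\<close>)
        ultimately show "f \<in> {f \<in> AlcG act p (Suc q). dv p (Suc q) f = (\<lambda>_ _. 0)}" by (auto simp: AlcG_def)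
      qed
    qed
  qed
qed

end
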